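(* Let $(\mathcal S,\mathcal C,\mathcal R,\mathcal K)$ be a deterministic reaction network system with species $X_1,\dots,X_d$, modeled by $\frac{d}{dt}x(t)=f(x(t))$, and let $PS=\{x\in\mathbb R^d_{>0}: f(x)=0\}$. Let $\theta,\mu>0$ and suppose there exists $x^*\in PS$ with $x^*_1=\mu/\theta$. Then the basic ACR network system $Z+X_1\xrightarrow{\theta}2Z$, $Z\xrightarrow{\mu}X_1$ (with mass-action kinetics, $Z$ a new species not in the given network) is a mass-action ACR controller for $(\mathcal S,\mathcal C,\mathcal R,\mathcal K)$, and the controlled system admits a positive steady state.
   Context: The basic ACR network system with mass-action kinetics has equations $x_1'=-z(\theta x_1-\mu)$, $z'=z(\theta x_1-\mu)$. The controlled (union) system has equations $x_1'=f_1(x)-z(\theta x_1-\mu)$, $z'=z(\theta x_1-\mu)$, and $x_i'=f_i(x)$ for $i\ge 2$. A deterministic system is an ACR system if it admits a positive steady state and some species has the same value at every positive steady state (an ACR species). An ACR network system $(\hat{\mathcal S},\hat{\mathcal C},\hat{\mathcal R},\hat{\mathcal K})$ with $X_1\in\mathcal S\cap\hat{\mathcal S}$ and $\hat{\mathcal S}\setminus\mathcal S\ne\emptyset$ is called an ACR controller for $(\mathcal S,\mathcal C,\mathcal R,\mathcal K)$ if the union system (right-hand sides added on shared species) is an ACR network system with $X_1$ as an ACR species; it is a mass-action ACR controller if it is a mass-action system. *)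

theory Defs
  imports Complex_Main
begin

type_synonym 's complex = "'s \<Rightarrow> nat"

definition network_field ::
  "('s complex \<times> 's complex \<times> (('s \<Rightarrow> real) \<Rightarrow> real)) list
     \<Rightarrow> ('s \<Rightarrow> real) \<Rightarrow> ('s \<Rightarrow> real)" where
  "network_field R x = (\<lambda>s. sum_list (map (\<lambda>(y, y', kap). kap x * (real (y' s) - real (y s))) R))"

definition is_reaction_network_field :: "(('s \<Rightarrow> real) \<Rightarrow> ('s \<Rightarrow> real)) \<Rightarrow> bool" where
  "is_reaction_network_field f \<longleftrightarrow>
     (\<exists>R. (\<forall>(y, y', kap) \<in> set R. y \<noteq> y') \<and> f = network_field R)"

definition mass_action_field ::
  "('s::finite complex \<times> 's complex \<times> real) list \<Rightarrow> ('s \<Rightarrow> real) \<Rightarrow> ('s \<Rightarrow> real)" where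
  "mass_action_field R x =
     (\<lambda>s. sum_list (map (\<lambda>(y, y', k). k * (\<Prod>j\<in>UNIV. x j ^ y j) * (real (y' s) - real (y s))) R))"

definition positive_steady_states :: "(('s \<Rightarrow> real) \<Rightarrow> ('s \<Rightarrow> real)) \<Rightarrow> ('s \<Rightarrow> real) set" where
  "positive_steady_states f = {x. (\<forall>s. x s > 0) \<and> f x = (\<lambda>_. 0)}"

definition ACR_species :: "(('s \<Rightarrow> real) \<Rightarrow> ('s \<Rightarrow> real)) \<Rightarrow> 's \<Rightarrow> bool" where
  "ACR_species f s \<longleftrightarrow> (\<exists>c. \<forall>x \<in> positive_steady_states f. x s = c)"

definition is_ACR_system :: "(('s \<Rightarrow> real) \<Rightarrow> ('s \<Rightarrow> real)) \<Rightarrow> bool" where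
  "is_ACR_system f \<longleftrightarrow> positive_steady_states f \<noteq> {} \<and> (\<exists>s. ACR_species f s)"

definition unit_complex :: "'s \<Rightarrow> 's complex" where
  "unit_complex a = (\<lambda>s. if s = a then 1 else 0)"

definition basic_reactions :: "'s \<Rightarrow> 's \<Rightarrow> real \<Rightarrow> real \<Rightarrow> ('s complex \<times> 's complex \<times> real) list" where
  "basic_reactions x1 z theta mu =
     [(\<lambda>s. unit_complex z s + unit_complex x1 s, \<lambda>s. 2 * unit_complex z s, theta),
      (unit_complex z, unit_complex x1, mu)]"

text \<open>The controller as a network on its own two species.\<close>
datatype basic_species = X1c | Zc

instance basic_species :: finite
proof
  have "(UNIV :: basic_species set) = {X1c, Zc}" using basic_species.exhaust by auto
  then show "finite (UNIV :: basic_species set)" by (metis finite.emptyI finite.insertI)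
qed

text \<open>Union (controlled) system on species 's option: Some s are the original
  species, None is the new species Z.  Right-hand sides are added on shared species
  (only X1 = Some X1 is shared).\<close>
definition controlled_field ::
  "(('s::finite \<Rightarrow> real) \<Rightarrow> ('s \<Rightarrow> real)) \<Rightarrow> 's \<Rightarrow> real \<Rightarrow> real
     \<Rightarrow> ('s option \<Rightarrow> real) \<Rightarrow> ('s option \<Rightarrow> real)" where
  "controlled_field f X1 theta mu y =
     (\<lambda>sp. (case sp of None \<Rightarrow> 0 | Some s \<Rightarrow> f (\<lambda>j. y (Some j)) s)
           + mass_action_field (basic_reactions (Some X1) None theta mu) y sp)"

end

theory Submission
  imports Defs
begin

lemma prod_unit: "(\<Prod>j\<in>(UNIV::'s::finite set). x j ^ unit_complex a j) = x a"
proof -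
  have "(\<Prod>j\<in>(UNIV::'s set). x j ^ unit_complex a j) = (\<Prod>j\<in>(UNIV::'s set). if j = a then x j else 1)"
    by (rule prod.cong) (auto simp: unit_complex_def)
  also have "\<dots> = x a" by (simp add: prod.delta')
  finally show ?thesis .
qed

lemma basic_field:
  fixes a b :: "'s::finite"
  assumes "a \<noteq> b"
  shows "mass_action_field (basic_reactions a b theta mu) x =
    (\<lambda>s. (if s = a then - (x b * (theta * x a - mu)) else 0) + (if s = b then x b * (theta * x a - mu) else 0))"
proof -
  have p1: "(\<Prod>j\<in>(UNIV::'s set). x j ^ (unit_complex b j + unit_complex a j)) = x b * x a"
    by (simp add: power_add prod.distrib prod_unit)
  have p2: "(\<Prod>j\<in>(UNIV::'s set). x j ^ unit_complex b j) = x b" by (rule prod_unit)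
  show ?thesis
    unfolding mass_action_field_def basic_reactions_def
    using assms
    apply (simp only: list.map prod.case p1 p2 sum_list.Cons sum_list.Nil)
    by (auto simp: unit_complex_def algebra_simps fun_eq_iff)
qed

theorem mainTheorem2:
  fixes f :: "('s::finite \<Rightarrow> real) \<Rightarrow> ('s \<Rightarrow> real)"
    and X1 :: 's and theta mu :: real
  assumes "is_reaction_network_field f"
    and "theta > 0" and "mu > 0"
    and "\<exists>xs \<in> positive_steady_states f. xs X1 = mu / theta"
  shows "is_ACR_system (mass_action_field (basic_reactions X1c Zc theta mu))
       \<and> ACR_species (mass_action_field (basic_reactions X1c Zc theta mu)) X1c
       \<and> is_ACR_system (controlled_field f X1 theta mu)
       \<and> ACR_species (controlled_field f X1 theta mu) (Some X1)
       \<and> positive_steady_states (controlled_field f X1 theta mu) \<noteq> {}"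
proof -
  obtain xs where xs: "\<forall>s. xs s > 0" "f xs = (\<lambda>_. 0)" "xs X1 = mu / theta"
    using assms(4) unfolding positive_steady_states_def by auto
  have th: "theta * (mu / theta) - mu = 0" using assms(2) by simp
  have B: "mass_action_field (basic_reactions X1c Zc theta mu) x =
    (\<lambda>s. (if s = X1c then - (x Zc * (theta * x X1c - mu)) else 0) + (if s = Zc then x Zc * (theta * x X1c - mu) else 0))" for x
    by (rule basic_field) simp
  have C: "mass_action_field (basic_reactions (Some X1) None theta mu) y =
    (\<lambda>s. (if s = Some X1 then - (y None * (theta * y (Some X1) - mu)) else 0) + (if s = None then y None * (theta * y (Some X1) - mu) else 0))" for y :: "'s option \<Rightarrow> real"
    by (rule basic_field) simp
  define b0 where "b0 = (\<lambda>s::basic_species. if s = X1c then mu / theta else 1)"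
  have b0: "b0 \<in> positive_steady_states (mass_action_field (basic_reactions X1c Zc theta mu))"
    unfolding positive_steady_states_def B b0_def using assms(2,3) th by (auto simp: fun_eq_iff)
  have bacr: "ACR_species (mass_action_field (basic_reactions X1c Zc theta mu)) X1c"
    unfolding ACR_species_def
  proof (intro exI ballI)
    fix x assume "x \<in> positive_steady_states (mass_action_field (basic_reactions X1c Zc theta mu))"
    then have p: "x Zc > 0" and e: "B' = 0" if "B' = x Zc * (theta * x X1c - mu)" for B'
      unfolding positive_steady_states_def B fun_eq_iff using that by (auto dest: spec[of _ Zc])
    have "theta * x X1c - mu = 0" using e[OF refl] p by simp
    then show "x X1c = mu / theta" using assms(2) by (simp add: field_simps)
  qed
  define y0 where "y0 = (\<lambda>s::'s option. case s of None \<Rightarrow> 1 | Some j \<Rightarrow> xs j)"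
  have y0s: "(\<lambda>j. y0 (Some j)) = xs" by (simp add: y0_def)
  have y0: "y0 \<in> positive_steady_states (controlled_field f X1 theta mu)"
    unfolding positive_steady_states_def controlled_field_def C y0s
    using xs th by (auto simp: fun_eq_iff y0_def split: option.splits)
  have cacr: "ACR_species (controlled_field f X1 theta mu) (Some X1)"
    unfolding ACR_species_def
  proof (intro exI ballI)
    fix x assume "x \<in> positive_steady_states (controlled_field f X1 theta mu)"
    then have p: "x None > 0" and e: "x None * (theta * x (Some X1) - mu) = 0"
      unfolding positive_steady_states_def controlled_field_def C fun_eq_iff
      by (auto dest: spec[of _ None])
    have "theta * x (Some X1) - mu = 0" using e p by simp
    then show "x (Some X1) = mu / theta" using assms(2) by (simp add: field_simps)
  qed
  show ?thesis using b0 bacr y0 cacr unfolding is_ACR_system_def by blast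
qed

end
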